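(* Let $\alpha,\beta,\gamma,\Delta\in\mathbb{C}$ with $(\Delta,\beta)\neq(0,0)$. Consider extensions of conformal $\mathrm{HV}$-modules $$0\to\mathbb{C}c_\gamma\to E\to V(\alpha,\beta,\Delta)\to0,$$ realized as $E=\mathbb{C}c_\gamma\oplus\mathbb{C}[\partial]v_\Delta$ with $\mathbb{C}c_\gamma$ a submodule and $L_\lambda v_\Delta=(\partial+\alpha+\Delta\lambda)v_\Delta+f(\lambda)c_\gamma$, $N_\lambda v_\Delta=\beta v_\Delta+k(\lambda)c_\gamma$, $f,k\in\mathbb{C}[\lambda]$. Nontrivial extensions of this form exist if and only if $\alpha+\gamma=0$, $\beta=0$ and $\Delta\in\{1,2\}$. They are given, up to equivalence, by: (i) $k(\lambda)=k_1\lambda$, $f(\lambda)=f_2\lambda^2$, for $\Delta=1$ and $(k_1,f_2)\neq(0,0)$; (ii) $k=0$, $f(\lambda)=f_3\lambda^3$, for $\Delta=2$ and $f_3\neq0$. Furthermore, the trivial cocycles are exactly the pairs $(f,k)=(a(\alpha+\gamma+\Delta\lambda),a\beta)$, $a\in\mathbb{C}$.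
   Context: A conformal module over a Lie conformal algebra $R$ is a $\mathbb{C}[\partial]$-module $V$ with $a\mapsto a_\lambda\in\mathrm{End}_{\mathbb{C}}(V)\otimes\mathbb{C}[\lambda]$ satisfying $[a_\lambda,b_\mu]=[a_\lambda b]_{\lambda+\mu}$ and $(\partial a)_\lambda=[\partial,a_\lambda]=-\lambda a_\lambda$. The Heisenberg–Virasoro conformal algebra $\mathrm{HV}$ is the free $\mathbb{C}[\partial]$-module with basis $L,N$ and $\lambda$-brackets $[L_\lambda L]=(\partial+2\lambda)L$, $[L_\lambda N]=(\partial+\lambda)N$, $[N_\lambda L]=\lambda N$, $[N_\lambda N]=0$. $V(\alpha,\beta,\Delta)=\mathbb{C}[\partial]v_\Delta$ with $L_\lambda v_\Delta=(\partial+\alpha+\Delta\lambda)v_\Delta$, $N_\lambda v_\Delta=\beta v_\Delta$. $\mathbb{C}c_\gamma$ is the one-dimensional module with $\partial c_\gamma=\gamma c_\gamma$ and $L_\lambda c_\gamma=N_\lambda c_\gamma=0$. An extension of $W$ by $V$ is an exact sequence $0\to V\to E\to W\to0$ of conformal modules; equivalence via a module map of middle terms compatible with identities; trivial means equivalent to the direct sum. *)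

theory Defs
  imports "HOL-Computational_Algebra.Polynomial"
begin

text \<open>An element (c, p) stands for
  c * c_gamma + p(d) v_Delta, with c complex and p a complex polynomial in d.
  lambda-brackets are polynomial in lambda; we evaluate them at complex lambda
  (polynomial identities are equivalent to identities at all complex values).\<close>

type_synonym E = "complex \<times> complex poly"

definition addE :: "E \<Rightarrow> E \<Rightarrow> E" where
  "addE x y = (fst x + fst y, snd x + snd y)"

definition scaleE :: "complex \<Rightarrow> E \<Rightarrow> E" where
  "scaleE z x = (z * fst x, smult z (snd x))"

definition dE :: "complex \<Rightarrow> E \<Rightarrow> E" where
  "dE \<gamma> x = (\<gamma> * fst x, [:0, 1:] * snd x)"

text \<open>L_lambda extended from L_lambda v = (d + alpha + Delta lambda) v + f(lambda) c and
  L_lambda c = 0 via L_lambda p(d) = p(d + lambda) L_lambda (C-linearity).\<close>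
definition Lact :: "complex \<Rightarrow> complex \<Rightarrow> complex \<Rightarrow> complex poly \<Rightarrow> complex \<Rightarrow> E \<Rightarrow> E" where
  "Lact \<alpha> \<Delta> \<gamma> f lam x =
     (poly (snd x) (\<gamma> + lam) * poly f lam,
      pcompose (snd x) [:lam, 1:] * [:\<alpha> + \<Delta> * lam, 1:])"

definition Nact :: "complex \<Rightarrow> complex \<Rightarrow> complex poly \<Rightarrow> complex \<Rightarrow> E \<Rightarrow> E" where
  "Nact \<beta> \<gamma> k lam x =
     (poly (snd x) (\<gamma> + lam) * poly k lam,
      smult \<beta> (pcompose (snd x) [:lam, 1:]))"

definition is_ext :: "complex \<Rightarrow> complex \<Rightarrow> complex \<Rightarrow> complex \<Rightarrow> complex poly \<Rightarrow> complex poly \<Rightarrow> bool" where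
  "is_ext \<alpha> \<beta> \<gamma> \<Delta> f k \<longleftrightarrow>
    (\<forall>l m x.
      let L = Lact \<alpha> \<Delta> \<gamma> f; N = Nact \<beta> \<gamma> k in
      addE (L l (L m x)) (scaleE (-1) (L m (L l x))) = scaleE (l - m) (L (l + m) x) \<and>
      addE (L l (N m x)) (scaleE (-1) (N m (L l x))) = scaleE (- m) (N (l + m) x) \<and>
      addE (N l (L m x)) (scaleE (-1) (L m (N l x))) = scaleE l (N (l + m) x) \<and>
      addE (N l (N m x)) (scaleE (-1) (N m (N l x))) = (0, 0) \<and>
      addE (dE \<gamma> (L l x)) (scaleE (-1) (L l (dE \<gamma> x))) = scaleE (- l) (L l x) \<and>
      addE (dE \<gamma> (N l x)) (scaleE (-1) (N l (dE \<gamma> x))) = scaleE (- l) (N l x))"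

definition ext_equiv ::
  "complex \<Rightarrow> complex \<Rightarrow> complex \<Rightarrow> complex \<Rightarrow> complex poly \<Rightarrow> complex poly \<Rightarrow>
   complex poly \<Rightarrow> complex poly \<Rightarrow> bool" where
  "ext_equiv \<alpha> \<beta> \<gamma> \<Delta> f k f' k' \<longleftrightarrow>
    (\<exists>\<phi> :: E \<Rightarrow> E.
      (\<forall>x y. \<phi> (addE x y) = addE (\<phi> x) (\<phi> y)) \<and>
      (\<forall>z x. \<phi> (scaleE z x) = scaleE z (\<phi> x)) \<and>
      (\<forall>x. \<phi> (dE \<gamma> x) = dE \<gamma> (\<phi> x)) \<and>
      (\<forall>l x. \<phi> (Lact \<alpha> \<Delta> \<gamma> f l x) = Lact \<alpha> \<Delta> \<gamma> f' l (\<phi> x)) \<and>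
      (\<forall>l x. \<phi> (Nact \<beta> \<gamma> k l x) = Nact \<beta> \<gamma> k' l (\<phi> x)) \<and>
      (\<forall>c. \<phi> (c, 0) = (c, 0)) \<and>
      (\<forall>x. snd (\<phi> x) = snd x))"

definition trivial_ext :: "complex \<Rightarrow> complex \<Rightarrow> complex \<Rightarrow> complex \<Rightarrow> complex poly \<Rightarrow> complex poly \<Rightarrow> bool" where
  "trivial_ext \<alpha> \<beta> \<gamma> \<Delta> f k \<longleftrightarrow>
     is_ext \<alpha> \<beta> \<gamma> \<Delta> f k \<and> ext_equiv \<alpha> \<beta> \<gamma> \<Delta> f k 0 0"

end

theory Submission
  imports Defs
begin

definition C1 :: "complex \<Rightarrow> complex \<Rightarrow> complex poly \<Rightarrow> bool" where
  "C1 s \<Delta> f \<longleftrightarrow> (\<forall>l m. (s + l + \<Delta>*m) * poly f l - (s + m + \<Delta>*l) * poly f m = (l - m) * poly f (l+m))"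
definition C2 :: "complex \<Rightarrow> complex \<Rightarrow> complex \<Rightarrow> complex poly \<Rightarrow> complex poly \<Rightarrow> bool" where
  "C2 s \<beta> \<Delta> f k \<longleftrightarrow> (\<forall>l m. \<beta> * poly f l - (s + m + \<Delta>*l) * poly k m = - m * poly k (l+m))"
definition C3 :: "complex \<Rightarrow> complex poly \<Rightarrow> bool" where
  "C3 \<beta> k \<longleftrightarrow> (\<forall>l m. \<beta> * poly k l = \<beta> * poly k m)"

lemma peq: fixes p q :: "complex poly" assumes "\<And>x. poly p x = poly q x" shows "p = q"
proof -
  have "poly p = poly q" using assms by auto
  thus ?thesis by (simp only: poly_eq_poly_eq_iff)
qed

lemma is_ext_D:
  assumes h: "is_ext \<alpha> \<beta> \<gamma> \<Delta> f k"
  shows "\<And>l m x. addE (Lact \<alpha> \<Delta> \<gamma> f l (Lact \<alpha> \<Delta> \<gamma> f m x)) (scaleE (-1) (Lact \<alpha> \<Delta> \<gamma> f m (Lact \<alpha> \<Delta> \<gamma> f l x))) = scaleE (l - m) (Lact \<alpha> \<Delta> \<gamma> f (l + m) x)"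
    and "\<And>l m x. addE (Lact \<alpha> \<Delta> \<gamma> f l (Nact \<beta> \<gamma> k m x)) (scaleE (-1) (Nact \<beta> \<gamma> k m (Lact \<alpha> \<Delta> \<gamma> f l x))) = scaleE (- m) (Nact \<beta> \<gamma> k (l + m) x)"
    and "\<And>l m x. addE (Nact \<beta> \<gamma> k l (Nact \<beta> \<gamma> k m x)) (scaleE (-1) (Nact \<beta> \<gamma> k m (Nact \<beta> \<gamma> k l x))) = (0, 0)"
  using h unfolding is_ext_def Let_def by blast+

lemma is_ext_iff:
  "is_ext \<alpha> \<beta> \<gamma> \<Delta> f k \<longleftrightarrow> C1 (\<alpha>+\<gamma>) \<Delta> f \<and> C2 (\<alpha>+\<gamma>) \<beta> \<Delta> f k \<and> C3 \<beta> k"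
proof
  assume h: "is_ext \<alpha> \<beta> \<gamma> \<Delta> f k"
  have "C1 (\<alpha>+\<gamma>) \<Delta> f" unfolding C1_def
  proof (intro allI)
    fix l m
    from h have "fst (addE (Lact \<alpha> \<Delta> \<gamma> f l (Lact \<alpha> \<Delta> \<gamma> f m (0,1))) (scaleE (-1) (Lact \<alpha> \<Delta> \<gamma> f m (Lact \<alpha> \<Delta> \<gamma> f l (0,1))))) = fst (scaleE (l - m) (Lact \<alpha> \<Delta> \<gamma> f (l + m) (0,1)))"
      using is_ext_D[OF h] by metis
    thus "(\<alpha>+\<gamma> + l + \<Delta>*m) * poly f l - (\<alpha>+\<gamma> + m + \<Delta>*l) * poly f m = (l - m) * poly f (l+m)"
      by (simp add: addE_def scaleE_def Lact_def poly_pcompose algebra_simps)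
  qed
  moreover have "C2 (\<alpha>+\<gamma>) \<beta> \<Delta> f k" unfolding C2_def
  proof (intro allI)
    fix l m
    from h have "fst (addE (Lact \<alpha> \<Delta> \<gamma> f l (Nact \<beta> \<gamma> k m (0,1))) (scaleE (-1) (Nact \<beta> \<gamma> k m (Lact \<alpha> \<Delta> \<gamma> f l (0,1))))) = fst (scaleE (- m) (Nact \<beta> \<gamma> k (l + m) (0,1)))"
      using is_ext_D[OF h] by metis
    thus "\<beta> * poly f l - (\<alpha>+\<gamma> + m + \<Delta>*l) * poly k m = - m * poly k (l+m)"
      by (simp add: addE_def scaleE_def Lact_def Nact_def poly_pcompose algebra_simps)
  qed
  moreover have "C3 \<beta> k" unfolding C3_def
  proof (intro allI)
    fix l m
    from h have "fst (addE (Nact \<beta> \<gamma> k l (Nact \<beta> \<gamma> k m (0,1))) (scaleE (-1) (Nact \<beta> \<gamma> k m (Nact \<beta> \<gamma> k l (0,1))))) = fst (0::complex, 0::complex poly)"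
      using is_ext_D[OF h] by metis
    thus "\<beta> * poly k l = \<beta> * poly k m"
      by (simp add: addE_def scaleE_def Nact_def poly_pcompose algebra_simps)
  qed
  ultimately show "C1 (\<alpha>+\<gamma>) \<Delta> f \<and> C2 (\<alpha>+\<gamma>) \<beta> \<Delta> f k \<and> C3 \<beta> k" by blast
next
  assume "C1 (\<alpha>+\<gamma>) \<Delta> f \<and> C2 (\<alpha>+\<gamma>) \<beta> \<Delta> f k \<and> C3 \<beta> k"
  hence h1: "\<And>l m. (\<alpha>+\<gamma> + l + \<Delta>*m) * poly f l - (\<alpha>+\<gamma> + m + \<Delta>*l) * poly f m = (l - m) * poly f (l+m)"
    and h2: "\<And>l m. \<beta> * poly f l - (\<alpha>+\<gamma> + m + \<Delta>*l) * poly k m = - m * poly k (l+m)"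
    and h3: "\<And>l m. \<beta> * poly k l = \<beta> * poly k m"
    unfolding C1_def C2_def C3_def by blast+
  show "is_ext \<alpha> \<beta> \<gamma> \<Delta> f k"
    unfolding is_ext_def Let_def
  proof (intro allI conjI)
    fix l m and x :: E
    obtain c p where x: "x = (c, p)" by fastforce
    show "addE (Lact \<alpha> \<Delta> \<gamma> f l (Lact \<alpha> \<Delta> \<gamma> f m x)) (scaleE (- 1) (Lact \<alpha> \<Delta> \<gamma> f m (Lact \<alpha> \<Delta> \<gamma> f l x))) =
       scaleE (l - m) (Lact \<alpha> \<Delta> \<gamma> f (l + m) x)"
    proof -
      have a: "poly p (\<gamma>+l+m) * ((\<alpha>+\<gamma> + l + \<Delta>*m) * poly f l - (\<alpha>+\<gamma> + m + \<Delta>*l) * poly f m) = poly p (\<gamma>+l+m) * ((l - m) * poly f (l+m))"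
        using h1 by simp
      show ?thesis unfolding x addE_def scaleE_def Lact_def
        apply (simp, intro conjI)
        using a apply (simp add: poly_pcompose algebra_simps)
        apply (rule peq) apply (simp add: poly_pcompose algebra_simps)
        done
    qed
    show "addE (Lact \<alpha> \<Delta> \<gamma> f l (Nact \<beta> \<gamma> k m x)) (scaleE (- 1) (Nact \<beta> \<gamma> k m (Lact \<alpha> \<Delta> \<gamma> f l x))) =
       scaleE (- m) (Nact \<beta> \<gamma> k (l + m) x)"
    proof -
      have a: "poly p (\<gamma>+l+m) * (\<beta> * poly f l - (\<alpha>+\<gamma> + m + \<Delta>*l) * poly k m) = poly p (\<gamma>+l+m) * (- m * poly k (l+m))"
        using h2 by simp
      show ?thesis unfolding x addE_def scaleE_def Lact_def Nact_def
        apply (simp, intro conjI)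
        using a apply (simp add: poly_pcompose algebra_simps)
        apply (rule peq) apply (simp add: poly_pcompose algebra_simps)
        done
    qed
    show "addE (Nact \<beta> \<gamma> k l (Lact \<alpha> \<Delta> \<gamma> f m x)) (scaleE (- 1) (Lact \<alpha> \<Delta> \<gamma> f m (Nact \<beta> \<gamma> k l x))) =
       scaleE l (Nact \<beta> \<gamma> k (l + m) x)"
    proof -
      have a: "poly p (\<gamma>+l+m) * (\<beta> * poly f m - (\<alpha>+\<gamma> + l + \<Delta>*m) * poly k l) = poly p (\<gamma>+l+m) * (- l * poly k (m+l))"
        using h2 by simp
      show ?thesis unfolding x addE_def scaleE_def Lact_def Nact_def
        apply (simp, intro conjI)
        using a apply (simp add: poly_pcompose algebra_simps)
        apply (rule peq) apply (simp add: poly_pcompose algebra_simps)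
        done
    qed
    show "addE (Nact \<beta> \<gamma> k l (Nact \<beta> \<gamma> k m x)) (scaleE (- 1) (Nact \<beta> \<gamma> k m (Nact \<beta> \<gamma> k l x))) = (0, 0)"
    proof -
      have a: "poly p (\<gamma>+l+m) * (\<beta> * poly k l) = poly p (\<gamma>+l+m) * (\<beta> * poly k m)"
        using h3 by simp
      show ?thesis unfolding x addE_def scaleE_def Nact_def
        apply (simp, intro conjI)
        using a apply (simp add: poly_pcompose algebra_simps)
        apply (rule peq) apply (simp add: poly_pcompose algebra_simps)
        done
    qed
    show "addE (dE \<gamma> (Lact \<alpha> \<Delta> \<gamma> f l x)) (scaleE (- 1) (Lact \<alpha> \<Delta> \<gamma> f l (dE \<gamma> x))) = scaleE (- l) (Lact \<alpha> \<Delta> \<gamma> f l x)"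
      unfolding x addE_def scaleE_def Lact_def dE_def
      apply (simp, intro conjI)
      apply (simp add: poly_pcompose algebra_simps)
      apply (rule peq) apply (simp add: poly_pcompose algebra_simps)
      done
    show "addE (dE \<gamma> (Nact \<beta> \<gamma> k l x)) (scaleE (- 1) (Nact \<beta> \<gamma> k l (dE \<gamma> x))) = scaleE (- l) (Nact \<beta> \<gamma> k l x)"
      unfolding x addE_def scaleE_def Nact_def dE_def
      apply (simp, intro conjI)
      apply (simp add: poly_pcompose algebra_simps)
      apply (rule peq) apply (simp add: poly_pcompose algebra_simps)
      done
  qed
qed


lemma ext_equiv_iff:
  "ext_equiv \<alpha> \<beta> \<gamma> \<Delta> f k f' k' \<longleftrightarrow> (\<exists>a. f' = f + smult a [:\<alpha>+\<gamma>, \<Delta>:] \<and> k' = k + [:a*\<beta>:])"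
proof
  assume "ext_equiv \<alpha> \<beta> \<gamma> \<Delta> f k f' k'"
  then obtain \<phi> :: "E \<Rightarrow> E" where
    add: "\<And>x y. \<phi> (addE x y) = addE (\<phi> x) (\<phi> y)" and
    sc: "\<And>z x. \<phi> (scaleE z x) = scaleE z (\<phi> x)" and
    d: "\<And>x. \<phi> (dE \<gamma> x) = dE \<gamma> (\<phi> x)" and
    L: "\<And>l x. \<phi> (Lact \<alpha> \<Delta> \<gamma> f l x) = Lact \<alpha> \<Delta> \<gamma> f' l (\<phi> x)" and
    N: "\<And>l x. \<phi> (Nact \<beta> \<gamma> k l x) = Nact \<beta> \<gamma> k' l (\<phi> x)" and
    c0: "\<And>c. \<phi> (c, 0) = (c, 0)" and
    sn: "\<And>x. snd (\<phi> x) = snd x"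
    unfolding ext_equiv_def by blast
  define a where "a = fst (\<phi> (0,1))"
  have p1: "\<phi> (0,1) = (a,1)" using sn[of "(0,1)"] unfolding a_def by (metis prod.collapse snd_conv)
  have split: "\<phi> (c,p) = addE (c,0) (\<phi> (0,p))" for c p
  proof -
    have "(c,p) = addE (c,0) (0,p)" by (simp add: addE_def)
    thus ?thesis using add c0 by metis
  qed
  have lin: "\<phi> (0,[:c,1:]) = (\<gamma>*a + c*a, [:c,1:])" for c
  proof -
    have "(0::complex,[:c,1:]) = addE (dE \<gamma> (0,1)) (scaleE c (0,1))" by (simp add: addE_def dE_def scaleE_def)
    hence "\<phi> (0,[:c,1:]) = addE (dE \<gamma> (a,1)) (scaleE c (a,1))" using add sc d p1 by metis
    thus ?thesis by (simp add: addE_def dE_def scaleE_def)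
  qed
  have cst: "\<phi> (0,[:c:]) = (c*a, [:c:])" for c
  proof -
    have "(0::complex,[:c:]) = scaleE c (0,1)" by (simp add: scaleE_def)
    hence "\<phi> (0,[:c:]) = scaleE c (a,1)" using sc p1 by metis
    thus ?thesis by (simp add: scaleE_def)
  qed
  have ef: "poly f' l = poly f l + a * (\<alpha>+\<gamma>+\<Delta>*l)" for l
  proof -
    have "\<phi> (Lact \<alpha> \<Delta> \<gamma> f l (0,1)) = Lact \<alpha> \<Delta> \<gamma> f' l (a,1)" using L p1 by metis
    moreover have "Lact \<alpha> \<Delta> \<gamma> f l (0,1) = (poly f l, [:\<alpha> + \<Delta>*l, 1:])" by (simp add: Lact_def pcompose_1)
    ultimately have "fst (addE (poly f l,0) (\<phi> (0,[:\<alpha> + \<Delta>*l, 1:]))) = fst (Lact \<alpha> \<Delta> \<gamma> f' l (a,1))"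
      using split by metis
    thus ?thesis unfolding lin by (simp add: addE_def Lact_def algebra_simps)
  qed
  have ek: "poly k' l = poly k l + a * \<beta>" for l
  proof -
    have "\<phi> (Nact \<beta> \<gamma> k l (0,1)) = Nact \<beta> \<gamma> k' l (a,1)" using N p1 by metis
    moreover have "Nact \<beta> \<gamma> k l (0,1) = (poly k l, [:\<beta>:])" by (simp add: Nact_def pcompose_1)
    ultimately have "fst (addE (poly k l,0) (\<phi> (0,[:\<beta>:]))) = fst (Nact \<beta> \<gamma> k' l (a,1))"
      using split by metis
    thus ?thesis unfolding cst by (simp add: addE_def Nact_def algebra_simps)
  qed
  show "\<exists>a. f' = f + smult a [:\<alpha>+\<gamma>, \<Delta>:] \<and> k' = k + [:a*\<beta>:]"
    by (rule exI[of _ a], intro conjI; rule peq; simp add: ef ek algebra_simps)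
next
  assume "\<exists>a. f' = f + smult a [:\<alpha>+\<gamma>, \<Delta>:] \<and> k' = k + [:a*\<beta>:]"
  then obtain a where ff: "f' = f + smult a [:\<alpha>+\<gamma>, \<Delta>:]" and kk: "k' = k + [:a*\<beta>:]" by blast
  define \<phi> :: "E \<Rightarrow> E" where "\<phi> x = (fst x + a * poly (snd x) \<gamma>, snd x)" for x
  show "ext_equiv \<alpha> \<beta> \<gamma> \<Delta> f k f' k'"
    unfolding ext_equiv_def
    apply (rule exI[of _ \<phi>])
    apply (intro conjI allI)
    apply (simp_all add: \<phi>_def addE_def scaleE_def dE_def Lact_def Nact_def ff kk poly_pcompose algebra_simps)
    done
qed



lemma C1_deriv:
  assumes h: "C1 0 \<Delta> f"
  shows "poly f 0 + \<Delta>*m*poly (pderiv f) 0 - (\<Delta>+1)*poly f m + m * poly (pderiv f) m = 0"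
    and "2*poly (pderiv f) 0 + \<Delta>*m*poly (pderiv (pderiv f)) 0 - 2*poly (pderiv f) m + m*poly (pderiv (pderiv f)) m = 0"
proof -
  define P where "P = [:\<Delta>*m,1:]*f - smult (poly f m) [:m,\<Delta>:] - [:-m,1:] * pcompose f [:m,1:]"
  have "poly P l = 0" for l
  proof -
    have "(0 + l + \<Delta>*m) * poly f l - (0 + m + \<Delta>*l) * poly f m = (l - m) * poly f (l+m)"
      using h unfolding C1_def by blast
    thus ?thesis unfolding P_def by (simp add: poly_pcompose algebra_simps)
  qed
  hence P0: "P = 0" using poly_all_0_iff_0 by blast
  have "poly (pderiv P) 0 = 0" using P0 by simp
  thus "poly f 0 + \<Delta>*m*poly (pderiv f) 0 - (\<Delta>+1)*poly f m + m * poly (pderiv f) m = 0"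
    unfolding P_def pderiv_diff pderiv_mult pderiv_smult pderiv_pcompose by (simp add: pderiv_pCons poly_pcompose algebra_simps)
  have "poly (pderiv (pderiv P)) 0 = 0" using P0 by simp
  thus "2*poly (pderiv f) 0 + \<Delta>*m*poly (pderiv (pderiv f)) 0 - 2*poly (pderiv f) m + m*poly (pderiv (pderiv f)) m = 0"
    unfolding P_def pderiv_diff pderiv_mult pderiv_smult pderiv_pcompose pderiv_add by (simp add: pderiv_pCons poly_pcompose algebra_simps)
qed



lemma C1_coeffs:
  assumes h: "C1 0 \<Delta> f" and D: "\<Delta> \<noteq> 0"
  shows "f = monom (coeff f 1) 1 + monom (coeff f 2) 2 + monom (coeff f 3) 3"
    and "(1 - \<Delta>) * coeff f 2 = 0" and "(2 - \<Delta>) * coeff f 3 = 0"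
proof -
  have "(0 + 1 + \<Delta>*0) * poly f 1 - (0 + 0 + \<Delta>*1) * poly f 0 = (1 - 0) * poly f (1+0)"
    using h unfolding C1_def by blast
  hence "\<Delta> * poly f 0 = 0" by simp
  hence f0: "coeff f 0 = 0" using D by (simp add: poly_0_coeff_0)
  define Q1 where "Q1 = pCons 0 (pderiv f) - smult (\<Delta>+1) f + [:poly f 0, \<Delta>*poly (pderiv f) 0:]"
  have "poly Q1 m = 0" for m
    using C1_deriv(1)[OF h, of m] unfolding Q1_def by (simp add: algebra_simps)
  hence Q1: "Q1 = 0" using poly_all_0_iff_0 by blast
  have c1: "(of_nat (n+2) - \<Delta> - 1) * coeff f (n+2) = 0" for n
  proof -
    have "coeff Q1 (Suc (Suc n)) = 0" using Q1 by simp
    thus ?thesis unfolding Q1_def by (simp add: coeff_pderiv algebra_simps)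
  qed
  define Q2 where "Q2 = [:2*poly (pderiv f) 0, \<Delta>*poly (pderiv (pderiv f)) 0:] - smult 2 (pderiv f) + pCons 0 (pderiv (pderiv f))"
  have "poly Q2 m = 0" for m
    using C1_deriv(2)[OF h, of m] unfolding Q2_def by (simp add: algebra_simps)
  hence Q2: "Q2 = 0" using poly_all_0_iff_0 by blast
  have c2: "(of_nat (n+3) * of_nat n) * coeff f (Suc (Suc (Suc n))) = 0" for n
  proof -
    have "coeff Q2 (Suc (Suc n)) = 0" using Q2 by simp
    thus ?thesis unfolding Q2_def by (simp add: coeff_pderiv algebra_simps)
  qed
  show "(1 - \<Delta>) * coeff f 2 = 0" using c1[of 0] by (simp add: algebra_simps numeral_2_eq_2)
  show "(2 - \<Delta>) * coeff f 3 = 0" using c1[of 1] by (simp add: algebra_simps numeral_3_eq_3)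
  show "f = monom (coeff f 1) 1 + monom (coeff f 2) 2 + monom (coeff f 3) 3"
  proof (rule poly_eqI)
    fix n
    show "coeff f n = coeff (monom (coeff f 1) 1 + monom (coeff f 2) 2 + monom (coeff f 3) 3) n"
    proof (cases "n \<ge> 4")
      case True
      define j where "j = n - 4"
      have j: "n = Suc (Suc (Suc (Suc j)))" using True unfolding j_def by simp
      have nz: "(4::complex) + of_nat j \<noteq> 0"
      proof -
        have "of_nat (4 + j) \<noteq> (0::complex)" by (simp only: of_nat_eq_0_iff)
        thus ?thesis by simp
      qed
      have "coeff f n = 0" using c2[of "Suc j"] nz unfolding j by (simp del: of_nat_Suc)
      thus ?thesis using True by (simp add: coeff_monom)
    next
      case False
      hence "n = 0 \<or> n = 1 \<or> n = 2 \<or> n = 3" by auto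
      thus ?thesis using f0 by (auto simp: coeff_monom)
    qed
  qed
qed



lemma classify:
  assumes nz: "(\<Delta>,\<beta>) \<noteq> (0,0)" and h1: "C1 s \<Delta> f" and h2: "C2 s \<beta> \<Delta> f k" and h3: "C3 \<beta> k"
  shows "(\<exists>a. f = smult a [:s,\<Delta>:] \<and> k = [:a*\<beta>:]) \<or>
         (s=0 \<and> \<beta>=0 \<and> \<Delta>=1 \<and> (\<exists>a1 a2 k1. f = monom a1 1 + monom a2 2 \<and> k = monom k1 1)) \<or>
         (s=0 \<and> \<beta>=0 \<and> \<Delta>=2 \<and> (\<exists>a1 a3. f = monom a1 1 + monom a3 3 \<and> k = 0))"
proof (cases "\<beta> = 0")
  case False
  define kz where "kz = poly k 0"
  have kc: "poly k l = kz" for l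
  proof -
    have "\<beta> * poly k l = \<beta> * poly k 0" using h3 unfolding C3_def by blast
    thus ?thesis using False unfolding kz_def by simp
  qed
  have fl: "poly f l = (kz / \<beta>) * (s + \<Delta>*l)" for l
  proof -
    have "\<beta> * poly f l - (s + 0 + \<Delta>*l) * poly k 0 = - 0 * poly k (l+0)" using h2 unfolding C2_def by blast
    thus ?thesis using False kc[of 0] by (simp add: field_simps)
  qed
  have "f = smult (kz / \<beta>) [:s,\<Delta>:]" by (rule peq) (use False in \<open>simp add: fl field_simps\<close>)
  moreover have "k = [:(kz / \<beta>)*\<beta>:]" by (rule peq) (use False kc in simp)
  ultimately show ?thesis by blast
next
  case b0: True
  hence D: "\<Delta> \<noteq> 0" using nz by simp
  have h2': "(s + m + \<Delta>*l) * poly k m = m * poly k (l+m)" for l m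
  proof -
    have "\<beta> * poly f l - (s + m + \<Delta>*l) * poly k m = - m * poly k (l+m)" using h2 unfolding C2_def by blast
    thus ?thesis using b0 by simp
  qed
  have sk: "s * poly k m = 0" for m using h2'[of m 0] by (simp add: algebra_simps)
  show ?thesis
  proof (cases "s = 0")
    case False
    have k0: "k = 0" using sk False by (intro peq) simp
    define fz where "fz = poly f 0"
    have fl: "poly f l = (fz / s) * (s + \<Delta>*l)" for l
    proof -
      have "(s + l + \<Delta>*0) * poly f l - (s + 0 + \<Delta>*l) * poly f 0 = (l - 0) * poly f (l+0)"
        using h1 unfolding C1_def by blast
      thus ?thesis using False unfolding fz_def by (simp add: field_simps)
    qed
    have "f = smult (fz / s) [:s,\<Delta>:]" by (rule peq) (use False in \<open>simp add: fl field_simps\<close>)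
    hence "f = smult (fz / s) [:s,\<Delta>:] \<and> k = [:(fz / s) * \<beta>:]" using k0 b0 by simp
    thus ?thesis by blast
  next
    case s0: True
    have k00: "poly k 0 = 0" using h2'[of 0 1] s0 D by simp
    have kk1: "(1 - \<Delta>) * poly k 1 = 0" using h2'[of 1 "-1"] s0 k00 by (simp add: algebra_simps)
    define kone where "kone = poly k 1"
    have kt: "poly k t = (1 + \<Delta>*(t-1)) * kone" for t
      using h2'[of 1 "t-1"] s0 unfolding kone_def by (simp add: algebra_simps)
    have C10: "C1 0 \<Delta> f" using h1 s0 by simp
    obtain a1 a2 a3 where fe: "f = monom a1 1 + monom a2 2 + monom a3 3"
      and fa2: "(1 - \<Delta>) * a2 = 0" and fa3: "(2 - \<Delta>) * a3 = 0"
      using C1_coeffs[OF C10 D] by blast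
    show ?thesis
    proof (cases "\<Delta> = 1")
      case True
      have "a3 = 0" using fa3 True by simp
      hence "f = monom a1 1 + monom a2 2" using fe by simp
      moreover have "k = monom kone 1" by (rule peq) (simp add: kt True poly_monom algebra_simps)
      ultimately show ?thesis using s0 b0 True by blast
    next
      case n1: False
      have k1: "kone = 0" using kk1 n1 unfolding kone_def by simp
      have kz: "k = 0" using kt k1 by (intro peq) simp
      have a2: "a2 = 0" using fa2 n1 by simp
      show ?thesis
      proof (cases "\<Delta> = 2")
        case True
        have "f = monom a1 1 + monom a3 3" using fe a2 by simp
        thus ?thesis using s0 b0 True kz by blast
      next
        case False
        have "a3 = 0" using fa3 False by simp
        hence "f = monom a1 1" using fe a2 by simp
        hence "f = smult (a1 / \<Delta>) [:s,\<Delta>:]" using s0 D by (intro peq) (simp add: poly_monom)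
        hence "f = smult (a1 / \<Delta>) [:s,\<Delta>:] \<and> k = [:(a1 / \<Delta>) * \<beta>:]" using kz b0 by simp
        thus ?thesis by blast
      qed
    qed
  qed
qed



lemma triv_iff:
  "trivial_ext \<alpha> \<beta> \<gamma> \<Delta> f k \<longleftrightarrow> (\<exists>a. f = smult a [:\<alpha> + \<gamma>, \<Delta>:] \<and> k = [:a * \<beta>:])"
proof
  assume "trivial_ext \<alpha> \<beta> \<gamma> \<Delta> f k"
  then obtain a where e1: "0 = f + smult a [:\<alpha>+\<gamma>, \<Delta>:]" and e2: "0 = k + [:a*\<beta>:]"
    unfolding trivial_ext_def ext_equiv_iff by blast
  have "f = (f + smult a [:\<alpha>+\<gamma>, \<Delta>:]) - smult a [:\<alpha>+\<gamma>, \<Delta>:]" by simp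
  also have "\<dots> = smult (-a) [:\<alpha>+\<gamma>, \<Delta>:]" unfolding e1[symmetric] by simp
  finally have ff: "f = smult (-a) [:\<alpha>+\<gamma>, \<Delta>:]" .
  have "k = (k + [:a*\<beta>:]) - [:a*\<beta>:]" by simp
  also have "\<dots> = [:(-a)*\<beta>:]" unfolding e2[symmetric] by simp
  finally have "k = [:(-a)*\<beta>:]" .
  with ff have "f = smult (-a) [:\<alpha>+\<gamma>, \<Delta>:] \<and> k = [:(-a)*\<beta>:]" by blast
  thus "\<exists>a. f = smult a [:\<alpha> + \<gamma>, \<Delta>:] \<and> k = [:a * \<beta>:]" by blast
next
  assume "\<exists>a. f = smult a [:\<alpha> + \<gamma>, \<Delta>:] \<and> k = [:a * \<beta>:]"
  then obtain a where f: "f = smult a [:\<alpha> + \<gamma>, \<Delta>:]" and k: "k = [:a * \<beta>:]" by blast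
  have "is_ext \<alpha> \<beta> \<gamma> \<Delta> f k"
    unfolding is_ext_iff C1_def C2_def C3_def f k by (simp add: algebra_simps)
  moreover have "ext_equiv \<alpha> \<beta> \<gamma> \<Delta> f k 0 0"
    unfolding ext_equiv_iff f k by (rule exI[of _ "-a"]) (simp add: smult_minus_left)
  ultimately show "trivial_ext \<alpha> \<beta> \<gamma> \<Delta> f k" unfolding trivial_ext_def by blast
qed

lemma ex1:
  assumes "\<alpha> + \<gamma> = 0" "\<beta> = 0" "\<Delta> = 1" "(k1, f2) \<noteq> (0, 0)"
  shows "is_ext \<alpha> \<beta> \<gamma> \<Delta> (monom f2 2) (monom k1 1) \<and> \<not> trivial_ext \<alpha> \<beta> \<gamma> \<Delta> (monom f2 2) (monom k1 1)"
proof
  show "is_ext \<alpha> \<beta> \<gamma> \<Delta> (monom f2 2) (monom k1 1)"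
    unfolding is_ext_iff C1_def C2_def C3_def using assms(1-3)
    by (simp add: poly_monom algebra_simps power2_eq_square)
  show "\<not> trivial_ext \<alpha> \<beta> \<gamma> \<Delta> (monom f2 2) (monom k1 1)"
  proof
    assume "trivial_ext \<alpha> \<beta> \<gamma> \<Delta> (monom f2 2) (monom k1 1)"
    then obtain a where e1: "monom f2 2 = smult a [:\<alpha> + \<gamma>, \<Delta>:]" and e2: "monom k1 1 = [:a * \<beta>:]"
      unfolding triv_iff by blast
    have "f2 = 0" using arg_cong[OF e1, of "\<lambda>p. coeff p 2"] by (simp add: numeral_2_eq_2)
    moreover have "k1 = 0" using arg_cong[OF e2, of "\<lambda>p. coeff p 1"] by simp
    ultimately show False using assms(4) by simp
  qed
qed

lemma ex2:
  assumes "\<alpha> + \<gamma> = 0" "\<beta> = 0" "\<Delta> = 2" "f3 \<noteq> 0"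
  shows "is_ext \<alpha> \<beta> \<gamma> \<Delta> (monom f3 3) 0 \<and> \<not> trivial_ext \<alpha> \<beta> \<gamma> \<Delta> (monom f3 3) 0"
proof
  show "is_ext \<alpha> \<beta> \<gamma> \<Delta> (monom f3 3) 0"
    unfolding is_ext_iff C1_def C2_def C3_def using assms(1-3)
    by (simp add: poly_monom algebra_simps power3_eq_cube)
  show "\<not> trivial_ext \<alpha> \<beta> \<gamma> \<Delta> (monom f3 3) 0"
  proof
    assume "trivial_ext \<alpha> \<beta> \<gamma> \<Delta> (monom f3 3) 0"
    then obtain a where e1: "monom f3 3 = smult a [:\<alpha> + \<gamma>, \<Delta>:]"
      unfolding triv_iff by blast
    have "f3 = 0" using arg_cong[OF e1, of "\<lambda>p. coeff p 3"] by (simp add: numeral_3_eq_3)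
    thus False using assms(4) by simp
  qed
qed



theorem corollary6p1:
  fixes \<alpha> \<beta> \<gamma> \<Delta> :: complex
  assumes "(\<Delta>, \<beta>) \<noteq> (0, 0)"
  shows
    "((\<exists>f k. is_ext \<alpha> \<beta> \<gamma> \<Delta> f k \<and> \<not> trivial_ext \<alpha> \<beta> \<gamma> \<Delta> f k) \<longleftrightarrow>
        (\<alpha> + \<gamma> = 0 \<and> \<beta> = 0 \<and> \<Delta> \<in> {1, 2}))
   \<and> ((\<alpha> + \<gamma> = 0 \<and> \<beta> = 0 \<and> \<Delta> = 1) \<longrightarrow>
        (\<forall>k1 f2. (k1, f2) \<noteq> (0, 0) \<longrightarrow>
            is_ext \<alpha> \<beta> \<gamma> \<Delta> (monom f2 2) (monom k1 1) \<and>
            \<not> trivial_ext \<alpha> \<beta> \<gamma> \<Delta> (monom f2 2) (monom k1 1)) \<and>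
        (\<forall>f k. is_ext \<alpha> \<beta> \<gamma> \<Delta> f k \<and> \<not> trivial_ext \<alpha> \<beta> \<gamma> \<Delta> f k \<longrightarrow>
            (\<exists>k1 f2. (k1, f2) \<noteq> (0, 0) \<and>
               ext_equiv \<alpha> \<beta> \<gamma> \<Delta> f k (monom f2 2) (monom k1 1))) \<and>
        (\<forall>k1 f2 k1' f2'.
            ext_equiv \<alpha> \<beta> \<gamma> \<Delta> (monom f2 2) (monom k1 1) (monom f2' 2) (monom k1' 1)
            \<longrightarrow> k1 = k1' \<and> f2 = f2'))
   \<and> ((\<alpha> + \<gamma> = 0 \<and> \<beta> = 0 \<and> \<Delta> = 2) \<longrightarrow>
        (\<forall>f3. f3 \<noteq> 0 \<longrightarrow>
            is_ext \<alpha> \<beta> \<gamma> \<Delta> (monom f3 3) 0 \<and>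
            \<not> trivial_ext \<alpha> \<beta> \<gamma> \<Delta> (monom f3 3) 0) \<and>
        (\<forall>f k. is_ext \<alpha> \<beta> \<gamma> \<Delta> f k \<and> \<not> trivial_ext \<alpha> \<beta> \<gamma> \<Delta> f k \<longrightarrow>
            (\<exists>f3. f3 \<noteq> 0 \<and> ext_equiv \<alpha> \<beta> \<gamma> \<Delta> f k (monom f3 3) 0)) \<and>
        (\<forall>f3 f3'. ext_equiv \<alpha> \<beta> \<gamma> \<Delta> (monom f3 3) 0 (monom f3' 3) 0 \<longrightarrow> f3 = f3'))
   \<and> (\<forall>f k. trivial_ext \<alpha> \<beta> \<gamma> \<Delta> f k \<longleftrightarrow>
        (\<exists>a. f = smult a [:\<alpha> + \<gamma>, \<Delta>:] \<and> k = [:a * \<beta>:]))"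
proof -
  have cl: "(s=0 \<and> \<beta>=0 \<and> \<Delta>=1 \<and> (\<exists>a1 a2 k1. f = monom a1 1 + monom a2 2 \<and> k = monom k1 1)) \<or>
         (s=0 \<and> \<beta>=0 \<and> \<Delta>=2 \<and> (\<exists>a1 a3. f = monom a1 1 + monom a3 3 \<and> k = 0))"
    if "is_ext \<alpha> \<beta> \<gamma> \<Delta> f k" "\<not> trivial_ext \<alpha> \<beta> \<gamma> \<Delta> f k" "s = \<alpha> + \<gamma>" for f k s
  proof -
    have c: "C1 s \<Delta> f" "C2 s \<beta> \<Delta> f k" "C3 \<beta> k" using that(1,3) by (simp_all add: is_ext_iff)
    have n: "\<not> (\<exists>a. f = smult a [:s, \<Delta>:] \<and> k = [:a * \<beta>:])" using that(2,3) triv_iff by metis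
    show ?thesis using classify[OF assms c] n by argo
  qed
  have P1: "(\<exists>f k. is_ext \<alpha> \<beta> \<gamma> \<Delta> f k \<and> \<not> trivial_ext \<alpha> \<beta> \<gamma> \<Delta> f k) \<longleftrightarrow>
        (\<alpha> + \<gamma> = 0 \<and> \<beta> = 0 \<and> \<Delta> \<in> {1, 2})"
  proof
    assume "\<exists>f k. is_ext \<alpha> \<beta> \<gamma> \<Delta> f k \<and> \<not> trivial_ext \<alpha> \<beta> \<gamma> \<Delta> f k"
    then obtain f k where "is_ext \<alpha> \<beta> \<gamma> \<Delta> f k" "\<not> trivial_ext \<alpha> \<beta> \<gamma> \<Delta> f k" by blast
    from cl[OF this refl] show "\<alpha> + \<gamma> = 0 \<and> \<beta> = 0 \<and> \<Delta> \<in> {1, 2}" by blast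
  next
    assume h: "\<alpha> + \<gamma> = 0 \<and> \<beta> = 0 \<and> \<Delta> \<in> {1, 2}"
    show "\<exists>f k. is_ext \<alpha> \<beta> \<gamma> \<Delta> f k \<and> \<not> trivial_ext \<alpha> \<beta> \<gamma> \<Delta> f k"
    proof (cases "\<Delta> = 1")
      case True
      have "(0::complex, 1::complex) \<noteq> (0,0)" by simp
      thus ?thesis using ex1[of \<alpha> \<gamma> \<beta> \<Delta> 0 1] h True by blast
    next
      case False
      hence "\<Delta> = 2" using h by simp
      have "(1::complex) \<noteq> 0" by simp
      thus ?thesis using ex2[of \<alpha> \<gamma> \<beta> \<Delta> 1] h \<open>\<Delta> = 2\<close> by blast
    qed
  qed
  have P2: "(\<alpha> + \<gamma> = 0 \<and> \<beta> = 0 \<and> \<Delta> = 1) \<longrightarrow>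
        (\<forall>k1 f2. (k1, f2) \<noteq> (0, 0) \<longrightarrow>
            is_ext \<alpha> \<beta> \<gamma> \<Delta> (monom f2 2) (monom k1 1) \<and>
            \<not> trivial_ext \<alpha> \<beta> \<gamma> \<Delta> (monom f2 2) (monom k1 1)) \<and>
        (\<forall>f k. is_ext \<alpha> \<beta> \<gamma> \<Delta> f k \<and> \<not> trivial_ext \<alpha> \<beta> \<gamma> \<Delta> f k \<longrightarrow>
            (\<exists>k1 f2. (k1, f2) \<noteq> (0, 0) \<and>
               ext_equiv \<alpha> \<beta> \<gamma> \<Delta> f k (monom f2 2) (monom k1 1))) \<and>
        (\<forall>k1 f2 k1' f2'.
            ext_equiv \<alpha> \<beta> \<gamma> \<Delta> (monom f2 2) (monom k1 1) (monom f2' 2) (monom k1' 1)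
            \<longrightarrow> k1 = k1' \<and> f2 = f2')"
  proof (intro impI conjI)
    assume h: "\<alpha> + \<gamma> = 0 \<and> \<beta> = 0 \<and> \<Delta> = 1"
    show "\<forall>k1 f2. (k1, f2) \<noteq> (0, 0) \<longrightarrow> is_ext \<alpha> \<beta> \<gamma> \<Delta> (monom f2 2) (monom k1 1) \<and>
            \<not> trivial_ext \<alpha> \<beta> \<gamma> \<Delta> (monom f2 2) (monom k1 1)" using ex1 h by blast
  next
    assume h: "\<alpha> + \<gamma> = 0 \<and> \<beta> = 0 \<and> \<Delta> = 1"
    show "\<forall>f k. is_ext \<alpha> \<beta> \<gamma> \<Delta> f k \<and> \<not> trivial_ext \<alpha> \<beta> \<gamma> \<Delta> f k \<longrightarrow>
            (\<exists>k1 f2. (k1, f2) \<noteq> (0, 0) \<and> ext_equiv \<alpha> \<beta> \<gamma> \<Delta> f k (monom f2 2) (monom k1 1))"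
    proof (intro allI impI)
      fix f k
      assume e: "is_ext \<alpha> \<beta> \<gamma> \<Delta> f k \<and> \<not> trivial_ext \<alpha> \<beta> \<gamma> \<Delta> f k"
      then obtain a1 a2 k1 where f: "f = monom a1 1 + monom a2 2" and k: "k = monom k1 1"
        using cl[of f k "\<alpha>+\<gamma>"] h by auto
      have "(k1, a2) \<noteq> (0,0)"
      proof
        assume "(k1, a2) = (0,0)"
        hence "f = smult a1 [:\<alpha> + \<gamma>, \<Delta>:] \<and> k = [:a1 * \<beta>:]"
          using f k h by (auto intro!: peq simp: poly_monom)
        thus False using e unfolding triv_iff by blast
      qed
      moreover have "ext_equiv \<alpha> \<beta> \<gamma> \<Delta> f k (monom a2 2) (monom k1 1)"
        unfolding ext_equiv_iff using h f k
        by (intro exI[of _ "-a1"] conjI peq) (auto simp: poly_monom)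
      ultimately show "\<exists>k1 f2. (k1, f2) \<noteq> (0, 0) \<and> ext_equiv \<alpha> \<beta> \<gamma> \<Delta> f k (monom f2 2) (monom k1 1)"
        by blast
    qed
  next
    assume h: "\<alpha> + \<gamma> = 0 \<and> \<beta> = 0 \<and> \<Delta> = 1"
    show "\<forall>k1 f2 k1' f2'. ext_equiv \<alpha> \<beta> \<gamma> \<Delta> (monom f2 2) (monom k1 1) (monom f2' 2) (monom k1' 1) \<longrightarrow> k1 = k1' \<and> f2 = f2'"
    proof (intro allI impI)
      fix k1 f2 k1' f2'
      assume "ext_equiv \<alpha> \<beta> \<gamma> \<Delta> (monom f2 2) (monom k1 1) (monom f2' 2) (monom k1' 1)"
      then obtain a where e1: "monom f2' 2 = monom f2 2 + smult a [:\<alpha> + \<gamma>, \<Delta>:]"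
        and e2: "monom k1' 1 = monom k1 1 + [:a * \<beta>:]" unfolding ext_equiv_iff by blast
      have "f2' = f2" using arg_cong[OF e1, of "\<lambda>p. coeff p 2"] by (simp add: numeral_2_eq_2)
      moreover have "k1' = k1" using arg_cong[OF e2, of "\<lambda>p. coeff p 1"] by simp
      ultimately show "k1 = k1' \<and> f2 = f2'" by simp
    qed
  qed
  have P3: "(\<alpha> + \<gamma> = 0 \<and> \<beta> = 0 \<and> \<Delta> = 2) \<longrightarrow>
        (\<forall>f3. f3 \<noteq> 0 \<longrightarrow>
            is_ext \<alpha> \<beta> \<gamma> \<Delta> (monom f3 3) 0 \<and>
            \<not> trivial_ext \<alpha> \<beta> \<gamma> \<Delta> (monom f3 3) 0) \<and>
        (\<forall>f k. is_ext \<alpha> \<beta> \<gamma> \<Delta> f k \<and> \<not> trivial_ext \<alpha> \<beta> \<gamma> \<Delta> f k \<longrightarrow>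
            (\<exists>f3. f3 \<noteq> 0 \<and> ext_equiv \<alpha> \<beta> \<gamma> \<Delta> f k (monom f3 3) 0)) \<and>
        (\<forall>f3 f3'. ext_equiv \<alpha> \<beta> \<gamma> \<Delta> (monom f3 3) 0 (monom f3' 3) 0 \<longrightarrow> f3 = f3')"
  proof (intro impI conjI)
    assume h: "\<alpha> + \<gamma> = 0 \<and> \<beta> = 0 \<and> \<Delta> = 2"
    show "\<forall>f3. f3 \<noteq> 0 \<longrightarrow> is_ext \<alpha> \<beta> \<gamma> \<Delta> (monom f3 3) 0 \<and> \<not> trivial_ext \<alpha> \<beta> \<gamma> \<Delta> (monom f3 3) 0"
      using ex2 h by blast
  next
    assume h: "\<alpha> + \<gamma> = 0 \<and> \<beta> = 0 \<and> \<Delta> = 2"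
    show "\<forall>f k. is_ext \<alpha> \<beta> \<gamma> \<Delta> f k \<and> \<not> trivial_ext \<alpha> \<beta> \<gamma> \<Delta> f k \<longrightarrow>
            (\<exists>f3. f3 \<noteq> 0 \<and> ext_equiv \<alpha> \<beta> \<gamma> \<Delta> f k (monom f3 3) 0)"
    proof (intro allI impI)
      fix f k
      assume e: "is_ext \<alpha> \<beta> \<gamma> \<Delta> f k \<and> \<not> trivial_ext \<alpha> \<beta> \<gamma> \<Delta> f k"
      then obtain a1 a3 where f: "f = monom a1 1 + monom a3 3" and k: "k = 0"
        using cl[of f k "\<alpha>+\<gamma>"] h by auto
      have "a3 \<noteq> 0"
      proof
        assume "a3 = 0"
        hence "f = smult (a1/2) [:\<alpha> + \<gamma>, \<Delta>:] \<and> k = [:(a1/2) * \<beta>:]"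
          using f k h by (auto intro!: peq simp: poly_monom)
        thus False using e unfolding triv_iff by blast
      qed
      moreover have "ext_equiv \<alpha> \<beta> \<gamma> \<Delta> f k (monom a3 3) 0"
        unfolding ext_equiv_iff using h f k
        by (intro exI[of _ "-a1/2"] conjI peq) (auto simp: poly_monom)
      ultimately show "\<exists>f3. f3 \<noteq> 0 \<and> ext_equiv \<alpha> \<beta> \<gamma> \<Delta> f k (monom f3 3) 0"
        by blast
    qed
  next
    assume h: "\<alpha> + \<gamma> = 0 \<and> \<beta> = 0 \<and> \<Delta> = 2"
    show "\<forall>f3 f3'. ext_equiv \<alpha> \<beta> \<gamma> \<Delta> (monom f3 3) 0 (monom f3' 3) 0 \<longrightarrow> f3 = f3'"
    proof (intro allI impI)
      fix f3 f3'
      assume "ext_equiv \<alpha> \<beta> \<gamma> \<Delta> (monom f3 3) 0 (monom f3' 3) 0"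
      then obtain a where e1: "monom f3' 3 = monom f3 3 + smult a [:\<alpha> + \<gamma>, \<Delta>:]"
        unfolding ext_equiv_iff by blast
      show "f3 = f3'" using arg_cong[OF e1, of "\<lambda>p. coeff p 3"] by (simp add: numeral_3_eq_3)
    qed
  qed
  show ?thesis
    apply (intro conjI)
       apply (rule P1)
      apply (rule P2)
     apply (rule P3)
    apply (intro allI)
    apply (rule triv_iff)
    done
qed


end
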